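(* Let $\varphi$ be an admissible order function and let $\Psi:(0,1]\to(0,\infty)$ be a function with $M_\varphi<m_\Psi$. Then there exists $C>0$ such that for every $0<r\le1$, $$\int_{\mathbb{R}^d}\frac{\Psi(|h|\wedge r)}{|h|^d\varphi(|h|)}\,dh\le C\frac{\Psi(r)}{\varphi(r)}.$$
   Context: $g:(0,1]\to(0,\infty)$ is almost increasing if $c\,g(r)\le g(R)$ for some $c\in(0,1]$ and all $0<r\le R\le1$, almost decreasing if $g(R)\le Cg(r)$ for some $C\ge1$ and all $0<r\le R\le1$. $M_g=\inf\{\alpha: g(r)/r^\alpha\text{ almost decreasing on }(0,1]\}$, $m_g=\sup\{\alpha: g(r)/r^\alpha\text{ almost increasing on }(0,1]\}$. An admissible order function is a smooth $\varphi:(0,\infty)\to(0,\infty)$, $\varphi(1)=1$, such that $\phi(r)=\varphi(r^{-1/2})^{-1}$ is a Bernstein function ($\phi\ge0$, $C^\infty$, $(-1)^n\phi^{(n)}\le0$ for $n\ge1$) and $a_1\lambda^{2\delta_1}\varphi(r)\le\varphi(\lambda r)\le a_2\lambda^{2\delta_2}\varphi(r)$ for all $\lambda\ge1,r>0$, for some $0<\delta_1\le\delta_2<1$, $a_1\in(0,1]$, $a_2\ge1$; $M_\varphi$ refers to the restriction of $\varphi$ to $(0,1]$. $|h|\wedge r=\min(|h|,r)$. *)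

theory Defs
  imports "HOL-Analysis.Analysis"
begin

definition almost_increasing :: "(real \<Rightarrow> real) \<Rightarrow> bool" where
  "almost_increasing g \<longleftrightarrow>
     (\<exists>c. 0 < c \<and> c \<le> 1 \<and> (\<forall>r R. 0 < r \<and> r \<le> R \<and> R \<le> 1 \<longrightarrow> c * g r \<le> g R))"

definition almost_decreasing :: "(real \<Rightarrow> real) \<Rightarrow> bool" where
  "almost_decreasing g \<longleftrightarrow>
     (\<exists>C. 1 \<le> C \<and> (\<forall>r R. 0 < r \<and> r \<le> R \<and> R \<le> 1 \<longrightarrow> g R \<le> C * g r))"

text \<open>Upper and lower indices (extended reals: Inf of empty set is +infinity, Sup of empty is -infinity).\<close>
definition upper_index :: "(real \<Rightarrow> real) \<Rightarrow> ereal" where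
  "upper_index g = Inf (ereal ` {\<alpha>. almost_decreasing (\<lambda>r. g r / r powr \<alpha>)})"

definition lower_index :: "(real \<Rightarrow> real) \<Rightarrow> ereal" where
  "lower_index g = Sup (ereal ` {\<alpha>. almost_increasing (\<lambda>r. g r / r powr \<alpha>)})"

definition smooth_on_real :: "real set \<Rightarrow> (real \<Rightarrow> real) \<Rightarrow> bool" where
  "smooth_on_real S f \<longleftrightarrow> (\<forall>n::nat. \<forall>x\<in>S. ((deriv ^^ n) f) differentiable (at x))"

definition bernstein :: "(real \<Rightarrow> real) \<Rightarrow> bool" where
  "bernstein f \<longleftrightarrow> smooth_on_real {0<..} f \<and> (\<forall>x>0. 0 \<le> f x) \<and>
     (\<forall>n::nat. n \<ge> 1 \<longrightarrow> (\<forall>x>0. (-1) ^ n * (deriv ^^ n) f x \<le> 0))"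

definition admissible_order :: "(real \<Rightarrow> real) \<Rightarrow> bool" where
  "admissible_order \<phi> \<longleftrightarrow>
     smooth_on_real {0<..} \<phi> \<and> (\<forall>r>0. 0 < \<phi> r) \<and> \<phi> 1 = 1 \<and>
     bernstein (\<lambda>x. inverse (\<phi> (x powr (-1/2)))) \<and>
     (\<exists>\<delta>1 \<delta>2 a1 a2. 0 < \<delta>1 \<and> \<delta>1 \<le> \<delta>2 \<and> \<delta>2 < 1 \<and> 0 < a1 \<and> a1 \<le> 1 \<and> 1 \<le> a2 \<and>
        (\<forall>t\<ge>1. \<forall>r>0. a1 * t powr (2*\<delta>1) * \<phi> r \<le> \<phi> (t * r) \<and>
                     \<phi> (t * r) \<le> a2 * t powr (2*\<delta>2) * \<phi> r))"

end

theory Submission imports Defs begin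

lemma two_pow_powr: "((2::real)^n) powr a = (2 powr a)^n"
proof -
  have "((2::real)^n) powr a = (2 powr real n) powr a" by (simp add: powr_realpow)
  also have "\<dots> = 2 powr (real n * a)" by (simp add: powr_powr)
  also have "\<dots> = (2 powr a)^n" by (simp add: powr_power)
  finally show ?thesis .
qed

lemma inv_two_pow_powr: "(1/(2::real)^n) powr a = (1/(2 powr a))^n"
  by (simp add: powr_divide two_pow_powr power_one_over)

lemma key_inner:
  fixes Psi phi :: "real \<Rightarrow> real" and s r c C' \<beta> \<gamma> :: real
  assumes s: "0 < s" "s \<le> r" "r \<le> 1"
    and c: "0 < c" and C': "1 \<le> C'"
    and ppos: "0 < phi s" "0 < phi r" and Ppos: "0 < Psi s" "0 < Psi r"
    and h1: "c * (Psi s / s powr \<beta>) \<le> Psi r / r powr \<beta>"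
    and h2: "phi r / r powr \<gamma> \<le> C' * (phi s / s powr \<gamma>)"
  shows "Psi s / phi s \<le> (C'/c) * (s/r) powr (\<beta> - \<gamma>) * (Psi r / phi r)"
proof -
  have r0: "0 < r" using s by linarith
  have sb: "0 < s powr \<beta>" "0 < s powr \<gamma>" "0 < r powr \<beta>" "0 < r powr \<gamma>" using s r0 by auto
  have a: "Psi s \<le> Psi r * s powr \<beta> / (c * r powr \<beta>)"
    using h1 c sb by (simp add: field_simps)
  have b: "phi r * s powr \<gamma> / (C' * r powr \<gamma>) \<le> phi s"
    using h2 C' sb by (simp add: field_simps)
  have bpos: "0 < phi r * s powr \<gamma> / (C' * r powr \<gamma>)" using sb ppos C' by auto
  have "Psi s / phi s \<le> (Psi r * s powr \<beta> / (c * r powr \<beta>)) / (phi r * s powr \<gamma> / (C' * r powr \<gamma>))"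
    by (rule frac_le) (use a b bpos Ppos in auto)
  also have "\<dots> = (C'/c) * ((s powr \<beta> / s powr \<gamma>) / (r powr \<beta> / r powr \<gamma>)) * (Psi r / phi r)"
    using sb c C' ppos by (simp add: field_simps)
  also have "(s powr \<beta> / s powr \<gamma>) / (r powr \<beta> / r powr \<gamma>) = (s/r) powr (\<beta> - \<gamma>)"
    by (simp add: powr_diff powr_divide)
  finally show ?thesis .
qed

lemma dyadic_in:
  fixes s r :: real assumes "0 < s" "s < r"
  shows "\<exists>n::nat. r / 2^(n+1) \<le> s \<and> s < r / 2^n"
proof -
  obtain m::nat where m: "r / s < m" using reals_Archimedean2 by blast
  have "m < (2::real)^m" by (rule of_nat_less_two_power)
  hence "r / s < 2^m" using m by linarith
  hence ex: "r / 2^m \<le> s" using assms by (simp add: field_simps)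
  define n where "n = (LEAST n::nat. r / 2^n \<le> s)"
  have n1: "r / 2^n \<le> s" unfolding n_def by (rule LeastI[of _ m]) (rule ex)
  have n0: "n \<noteq> 0" using n1 assms by (intro notI) simp
  then obtain k where k: "n = Suc k" by (cases n) auto
  have "\<not> r / 2^k \<le> s" using not_less_Least[of k "\<lambda>n. r / 2^n \<le> s"] k n_def by simp
  thus ?thesis using n1 k by (intro exI[of _ k]) auto
qed

lemma dyadic_out:
  fixes s r :: real assumes "0 < r" "r \<le> s"
  shows "\<exists>n::nat. r * 2^n \<le> s \<and> s < r * 2^(n+1)"
proof -
  obtain m::nat where m: "s / r < m" using reals_Archimedean2 by blast
  have "m < (2::real)^m" by (rule of_nat_less_two_power)
  hence "s / r < 2^m" using m by linarith
  hence ex: "s < r * 2^m" using assms by (simp add: field_simps)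
  define n where "n = (LEAST n::nat. s < r * 2^n)"
  have n1: "s < r * 2^n" unfolding n_def by (rule LeastI[of _ m]) (rule ex)
  have n0: "n \<noteq> 0" using n1 assms by (intro notI) simp
  then obtain k where k: "n = Suc k" by (cases n) auto
  have "\<not> s < r * 2^k" using not_less_Least[of k "\<lambda>n. s < r * 2^n"] k n_def by simp
  thus ?thesis using n1 k by (intro exI[of _ k]) auto
qed


theorem lemma4p2:
  fixes \<phi> \<Psi> :: "real \<Rightarrow> real"
  assumes "admissible_order \<phi>"
    and "\<forall>r. 0 < r \<and> r \<le> 1 \<longrightarrow> 0 < \<Psi> r"
    and "upper_index \<phi> < lower_index \<Psi>"
  shows "\<exists>C>0. \<forall>r. 0 < r \<and> r \<le> 1 \<longrightarrow>
     (\<integral>\<^sup>+ h. ennreal (\<Psi> (min (norm h) r) / (norm h ^ DIM('a) * \<phi> (norm h)))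
        \<partial>(lborel :: 'a::euclidean_space measure)) \<le> ennreal (C * \<Psi> r / \<phi> r)"
proof -
  note Psipos = assms(2)[rule_format]
  from assms(1) have phipos: "\<And>r. 0 < r \<Longrightarrow> 0 < \<phi> r"
    unfolding admissible_order_def by auto
  from assms(1) obtain \<delta>1 a1 where d1: "0 < \<delta>1" and a1: "0 < a1"
    and scal: "\<And>t r. 1 \<le> t \<Longrightarrow> 0 < r \<Longrightarrow> a1 * t powr (2*\<delta>1) * \<phi> r \<le> \<phi> (t * r)"
    unfolding admissible_order_def by blast
  from assms(3) obtain \<gamma> where g1: "almost_decreasing (\<lambda>r. \<phi> r / r powr \<gamma>)"
      and g2: "ereal \<gamma> < lower_index \<Psi>"
    unfolding upper_index_def by (auto simp: Inf_less_iff)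
  from g2 obtain \<beta> where b1: "almost_increasing (\<lambda>r. \<Psi> r / r powr \<beta>)" and gb: "\<gamma> < \<beta>"
    unfolding lower_index_def by (auto simp: less_Sup_iff)
  from b1 obtain c where c: "0 < c" and cinc0:
    "\<forall>s r. 0 < s \<and> s \<le> r \<and> r \<le> 1 \<longrightarrow> c * (\<Psi> s / s powr \<beta>) \<le> \<Psi> r / r powr \<beta>"
    unfolding almost_increasing_def by blast
  have cinc: "\<And>s r. 0 < s \<Longrightarrow> s \<le> r \<Longrightarrow> r \<le> 1 \<Longrightarrow> c * (\<Psi> s / s powr \<beta>) \<le> \<Psi> r / r powr \<beta>"
    using cinc0 by blast
  from g1 obtain C' where C': "1 \<le> C'" and Cdec0:
    "\<forall>s r. 0 < s \<and> s \<le> r \<and> r \<le> 1 \<longrightarrow> \<phi> r / r powr \<gamma> \<le> C' * (\<phi> s / s powr \<gamma>)"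
    unfolding almost_decreasing_def by blast
  have Cdec: "\<And>s r. 0 < s \<Longrightarrow> s \<le> r \<Longrightarrow> r \<le> 1 \<Longrightarrow> \<phi> r / r powr \<gamma> \<le> C' * (\<phi> s / s powr \<gamma>)"
    using Cdec0 by blast
  define K where "K = C' / c"
  define \<epsilon> where "\<epsilon> = \<beta> - \<gamma>"
  have K0: "0 < K" using c C' by (simp add: K_def)
  have e0: "0 < \<epsilon>" using gb by (simp add: \<epsilon>_def)
  have inner: "\<And>s r. 0 < s \<Longrightarrow> s \<le> r \<Longrightarrow> r \<le> 1 \<Longrightarrow>
      \<Psi> s / \<phi> s \<le> K * (s/r) powr \<epsilon> * (\<Psi> r / \<phi> r)"
  proof -
    fix s r :: real assume sr: "0 < s" "s \<le> r" "r \<le> 1"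
    show "\<Psi> s / \<phi> s \<le> K * (s/r) powr \<epsilon> * (\<Psi> r / \<phi> r)"
      unfolding K_def \<epsilon>_def
      by (rule key_inner[OF sr c C' _ _ _ _ cinc[OF sr] Cdec[OF sr]]) (use sr in \<open>auto intro: phipos Psipos\<close>)
  qed
  define d where "d = DIM('a)"
  have d0: "0 < d" by (simp add: d_def)
  define U where "U = unit_ball_vol (real d)"
  have U0: "0 < U" by (simp add: U_def)
  define q where "q = 1 / (2 powr \<epsilon>)"
  define p where "p = 1 / (2 powr (2*\<delta>1))"
  have q: "0 < q" "q < 1" using e0 by (auto simp: q_def)
  have p: "0 < p" "p < 1" using d1 by (auto simp: p_def)
  define e where "e n = U * 2^d * (K * q^n + p^n / a1)" for n
  have e_sum: "summable e"
    unfolding e_def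
    by (intro summable_mult summable_add summable_divide summable_geometric) (use q p in auto)
  have e_pos: "\<And>n. 0 \<le> e n" unfolding e_def using U0 K0 q p a1 by auto
  define C where "C = suminf e"
  have C0: "0 < C"
  proof -
    have "0 < K + 1 / a1" using K0 a1 by (simp add: add_pos_pos)
    hence "0 < e 0" unfolding e_def using U0 by simp
    thus ?thesis unfolding C_def using suminf_pos2[OF e_sum e_pos, of 0] by auto
  qed
  show ?thesis
  proof (intro exI[of _ C] conjI allI impI)
    show "0 < C" by (rule C0)
  next
    fix r :: real assume r: "0 < r \<and> r \<le> 1"
    hence r0: "0 < r" and r1: "r \<le> 1" by auto
    define P where "P = \<Psi> r / \<phi> r"
    have P0: "0 < P" using Psipos[of r] phipos[of r] r by (simp add: P_def)
    define A where "A n = K * q^n * P / (r/2^(n+1))^d" for n :: nat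
    define B where "B n = P / (a1 * (1/p)^n * (r*2^n)^d)" for n :: nat
    define g where "g n h = ennreal (A n) * indicator (ball (0::'a) (r/2^n)) h
        + ennreal (B n) * indicator (ball (0::'a) (r*2^(n+1))) h" for n h
    define f where "f h = \<Psi> (min (norm h) r) / (norm h ^ DIM('a) * \<phi> (norm h))" for h :: 'a
    have [measurable]: "ball (0::'a) \<rho> \<in> sets borel" for \<rho> by simp
    have gmeas: "\<And>n. g n \<in> borel_measurable lborel" unfolding g_def by measurable
    have pw: "ennreal (f h) \<le> (\<Sum>n. g n h)" for h
    proof -
      have trm: "g n h \<le> (\<Sum>n. g n h)" for n
        using sum_le_suminf[of "\<lambda>n. g n h" "{n}"] by (auto intro: summableI)
      define s where "s = norm h"
      consider "s = 0" | "0 < s" "s < r" | "r \<le> s" using norm_ge_zero[of h] s_def by linarith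
      then show ?thesis
      proof cases
        case 1
        then show ?thesis by (simp add: f_def s_def power_0_left)
      next
        case 2
        then obtain n where n: "r / 2^(n+1) \<le> s" "s < r / 2^n" using dyadic_in by blast
        have "f h = (\<Psi> s / \<phi> s) / s^d" using 2 by (simp add: f_def s_def d_def field_simps)
        also have "\<dots> \<le> (K * q^n * P) / (r/2^(n+1))^d"
        proof (rule frac_le)
          have "(s/r) powr \<epsilon> \<le> (1/2^n) powr \<epsilon>"
            by (rule powr_mono2) (use e0 2 n r0 in \<open>auto simp: field_simps\<close>)
          also have "\<dots> = q^n" by (simp add: inv_two_pow_powr q_def)
          finally have "(s/r) powr \<epsilon> \<le> q^n" .
          hence "K * (s/r) powr \<epsilon> * P \<le> K * q^n * P" using K0 P0 by simp
          thus "\<Psi> s / \<phi> s \<le> K * q ^ n * P"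
            using inner[of s r] 2 r1 unfolding P_def by linarith
          show "0 \<le> K * q ^ n * P" using K0 q P0 by simp
          show "0 < (r / 2 ^ (n + 1)) ^ d" using r0 by simp
          show "(r / 2 ^ (n + 1)) ^ d \<le> s ^ d" by (rule power_mono) (use n r0 in auto)
        qed
        also have "\<dots> = A n" by (simp add: A_def)
        finally have "ennreal (f h) \<le> ennreal (A n)" by (rule ennreal_leI)
        also have "\<dots> \<le> g n h" using n by (simp add: g_def s_def)
        finally show ?thesis using trm[of n] by simp
      next
        case 3
        then obtain n where n: "r * 2^n \<le> s" "s < r * 2^(n+1)" using dyadic_out r0 by blast
        have s0: "0 < s" using 3 r0 by simp
        have "a1 * (s/r) powr (2*\<delta>1) * \<phi> r \<le> \<phi> (s/r * r)"
          by (rule scal) (use 3 r0 in auto)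
        hence ph: "a1 * (s/r) powr (2*\<delta>1) * \<phi> r \<le> \<phi> s" using r0 by simp
        have "(2^n) powr (2*\<delta>1) \<le> (s/r) powr (2*\<delta>1)"
          by (rule powr_mono2) (use d1 n r0 in \<open>auto simp: field_simps\<close>)
        hence "(1/p)^n \<le> (s/r) powr (2*\<delta>1)" by (simp add: two_pow_powr p_def)
        hence ph2: "a1 * (1/p)^n * \<phi> r \<le> \<phi> s"
          using ph a1 phipos[OF r0] by (meson dual_order.trans mult_le_cancel_left_pos mult_right_mono less_imp_le)
        have "f h = \<Psi> r / (s^d * \<phi> s)" using 3 by (simp add: f_def s_def d_def)
        also have "\<dots> \<le> \<Psi> r / ((r*2^n)^d * (a1 * (1/p)^n * \<phi> r))"
        proof (rule divide_left_mono)
          show "0 \<le> \<Psi> r" using Psipos[of r] r by simp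
          show "0 < s ^ d * \<phi> s * ((r * 2 ^ n) ^ d * (a1 * (1 / p) ^ n * \<phi> r))"
            using s0 phipos[OF s0] r0 a1 p phipos[OF r0] by simp
          show "(r * 2 ^ n) ^ d * (a1 * (1 / p) ^ n * \<phi> r) \<le> s ^ d * \<phi> s"
            by (rule mult_mono) (use n r0 ph2 a1 p phipos[OF r0] in \<open>auto intro!: power_mono\<close>)
        qed
        also have "\<dots> = B n" unfolding B_def P_def using phipos[OF r0] by (simp add: field_simps)
        finally have "ennreal (f h) \<le> ennreal (B n)" by (rule ennreal_leI)
        also have "\<dots> \<le> g n h" using n by (simp add: g_def s_def)
        finally show ?thesis using trm[of n] by simp
      qed
    qed
    have gint: "integral\<^sup>N lborel (g n) = ennreal (P * e n)" for n
    proof -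
      have An0: "0 \<le> A n" unfolding A_def using K0 q P0 r0 by simp
      have Bn0: "0 \<le> B n" unfolding B_def using a1 p P0 r0 by simp
      have "integral\<^sup>N lborel (g n) = ennreal (A n) * emeasure lborel (ball (0::'a) (r/2^n))
            + ennreal (B n) * emeasure lborel (ball (0::'a) (r*2^(n+1)))"
        unfolding g_def by (subst nn_integral_add) (auto simp: nn_integral_cmult_indicator)
      also have "\<dots> = ennreal (A n) * ennreal (U * (r/2^n)^d) + ennreal (B n) * ennreal (U * (r*2^(n+1))^d)"
        using r0 by (simp add: emeasure_ball U_def d_def)
      also have "\<dots> = ennreal (A n * (U * (r/2^n)^d)) + ennreal (B n * (U * (r*2^(n+1))^d))"
        using An0 Bn0 U0 r0 by (simp add: ennreal_mult)
      also have "\<dots> = ennreal (A n * (U * (r/2^n)^d) + B n * (U * (r*2^(n+1))^d))"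
        by (rule ennreal_plus[symmetric]) (use An0 Bn0 U0 r0 in auto)
      also have "A n * (U * (r/2^n)^d) + B n * (U * (r*2^(n+1))^d) = P * e n"
      proof -
        have x1: "(r/2^(n+1))^d = (r/2^n)^d / 2^d" by (simp add: power_divide field_simps)
        have x2: "(r*2^(n+1))^d = (r*2^n)^d * 2^d" by (simp add: power_mult_distrib field_simps)
        have x3: "(1/p)^n * p^n = 1" using p by (simp add: power_one_over)
        have pos1: "0 < (r/2^n)^d" "0 < (r*2^n)^d" using r0 by auto
        show ?thesis unfolding A_def B_def e_def x1 x2 using pos1 a1 p x3 r0
          by (simp add: field_simps)
      qed
      finally show ?thesis .
    qed
    have "(\<integral>\<^sup>+ h. ennreal (f h) \<partial>(lborel :: 'a measure)) \<le> (\<integral>\<^sup>+ h. (\<Sum>n. g n h) \<partial>lborel)"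
      by (rule nn_integral_mono) (rule pw)
    also have "\<dots> = (\<Sum>n. integral\<^sup>N lborel (g n))" by (rule nn_integral_suminf) (rule gmeas)
    also have "\<dots> = (\<Sum>n. ennreal (P * e n))" by (simp add: gint)
    also have "\<dots> = ennreal (\<Sum>n. P * e n)"
      by (rule suminf_ennreal2) (use P0 e_pos e_sum in \<open>auto intro: summable_mult\<close>)
    also have "(\<Sum>n. P * e n) = P * C" unfolding C_def by (rule suminf_mult[OF e_sum])
    also have "P * C = C * \<Psi> r / \<phi> r" by (simp add: P_def)
    finally show "(\<integral>\<^sup>+ h. ennreal (\<Psi> (min (norm h) r) / (norm h ^ DIM('a) * \<phi> (norm h))) \<partial>(lborel :: 'a measure))
        \<le> ennreal (C * \<Psi> r / \<phi> r)" by (simp add: f_def)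
  qed
qed

end
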